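(* Let $M$ be an $m_1\times m_2\times m_3$ table with $m_1\ge m_2\ge m_3$, containing $m_1m_2m_3$ distinct (labeled) items, one in each cell. A shuffle operation arbitrarily permutes the items lying in a single column of $M$ in one of the three dimensions (i.e., the cells of a line parallel to one coordinate axis). Then for any two arrangements $S$ and $G$ of the items, $M$ can be taken from $S$ to $G$ using at most $m_1m_2+m_3(2m_2+m_1)+m_1m_2$ shuffles. *)

theory Defs
  imports "HOL-Combinatorics.Permutations"
begin

definition cells :: "nat \<Rightarrow> nat \<Rightarrow> nat \<Rightarrow> (nat \<times> nat \<times> nat) set" where
  "cells m1 m2 m3 = {(i, j, k). i < m1 \<and> j < m2 \<and> k < m3}"

definition table_lines :: "nat \<Rightarrow> nat \<Rightarrow> nat \<Rightarrow> (nat \<times> nat \<times> nat) set set" where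
  "table_lines m1 m2 m3 =
     {{(i, j, k) | i. i < m1} | j k. j < m2 \<and> k < m3}
   \<union> {{(i, j, k) | j. j < m2} | i k. i < m1 \<and> k < m3}
   \<union> {{(i, j, k) | k. k < m3} | i j. i < m1 \<and> j < m2}"

definition is_shuffle :: "nat \<Rightarrow> nat \<Rightarrow> nat \<Rightarrow> (nat \<times> nat \<times> nat \<Rightarrow> nat \<times> nat \<times> nat) \<Rightarrow> bool" where
  "is_shuffle m1 m2 m3 p \<longleftrightarrow> (\<exists>L \<in> table_lines m1 m2 m3. p permutes L)"

text \<open>An arrangement of distinct items: a bijection from the cells to the item set.
  Applying shuffle p to arrangement A gives the arrangement A \<circ> p
  (the item at cell c is the item previously at cell p c).\<close>
definition apply_shuffles :: "('c \<Rightarrow> 'b) \<Rightarrow> ('c \<Rightarrow> 'c) list \<Rightarrow> 'c \<Rightarrow> 'b" where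
  "apply_shuffles A ps = fold (\<lambda>p B. B \<circ> p) ps A"

end

theory Submission
  imports Defs
begin

lemma perm_of_inj:
  assumes "finite A" "p ` A \<subseteq> A" "inj_on p A" "\<And>x. x \<notin> A \<Longrightarrow> p x = x"
  shows "p permutes A"
proof (rule bij_imp_permutes)
  show "bij_betw p A A" using endo_inj_surj[OF assms(1-3)] assms(3) by (simp add: bij_betw_def)
qed (use assms in auto)

lemma hall:
  fixes N :: "'a \<Rightarrow> 'b set"
  assumes "finite P" "\<And>u. u \<in> P \<Longrightarrow> finite (N u)"
    "\<And>A. A \<subseteq> P \<Longrightarrow> card A \<le> card (\<Union>(N ` A))"
  shows "\<exists>h. inj_on h P \<and> (\<forall>u\<in>P. h u \<in> N u)"
  using assms
proof (induction "card P" arbitrary: P N rule: less_induct)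
  case less
  show ?case
  proof (cases "P = {}")
    case True then show ?thesis by auto
  next
    case False
    show ?thesis
    proof (cases "\<exists>A. A \<subseteq> P \<and> A \<noteq> {} \<and> A \<noteq> P \<and> card (\<Union>(N ` A)) \<le> card A")
      case True
      then obtain A where A: "A \<subseteq> P" "A \<noteq> {}" "A \<noteq> P" "card (\<Union>(N ` A)) \<le> card A" by blast
      have finA: "finite A" using A(1) less.prems(1) finite_subset by blast
      have cA: "card A < card P" using A(1,3) less.prems(1) by (meson psubsetI psubset_card_mono)
      have pa1: "\<And>u. u \<in> A \<Longrightarrow> finite (N u)" using less.prems(2) A(1) by blast
      have pa2: "\<And>B. B \<subseteq> A \<Longrightarrow> card B \<le> card (\<Union>(N ` B))" using less.prems(3) A(1) by blast
      obtain h1 where h1: "inj_on h1 A" "\<forall>u\<in>A. h1 u \<in> N u"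
        using less.hyps[OF cA finA pa1 pa2] by blast
      let ?NA = "\<Union>(N ` A)"
      have finNA: "finite ?NA" using finA less.prems(2) A(1) by auto
      have eqNA: "card ?NA = card A" using A(4) less.prems(3)[OF A(1)] by simp
      define N2 where "N2 u = N u - ?NA" for u
      have cPA: "card (P - A) < card P" 
      proof -
        have "card (P - A) = card P - card A" using A(1) finA by (simp add: card_Diff_subset)
        moreover have "card A > 0" using A(2) finA by auto
        moreover have "card A \<le> card P" using A(1) less.prems(1) by (simp add: card_mono)
        ultimately show ?thesis by linarith
      qed
      have finPA: "finite (P - A)" using less.prems(1) by simp
      have hall2: "card B \<le> card (\<Union>(N2 ` B))" if B: "B \<subseteq> P - A" for B
      proof -
        have finB: "finite B" using B finPA finite_subset by blast
        have e1: "\<Union>(N2 ` B) = \<Union>(N ` (A \<union> B)) - ?NA" by (auto simp: N2_def)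
        have s1: "?NA \<subseteq> \<Union>(N ` (A \<union> B))" by auto
        have f1: "finite (\<Union>(N ` (A \<union> B)))" using finA finB A(1) B less.prems(2) by auto
        have c1: "card (\<Union>(N2 ` B)) = card (\<Union>(N ` (A \<union> B))) - card ?NA"
          unfolding e1 using s1 f1 by (simp add: card_Diff_subset finNA)
        have c2: "card (A \<union> B) \<le> card (\<Union>(N ` (A \<union> B)))" using less.prems(3)[of "A \<union> B"] A(1) B by blast
        have c3: "card (A \<union> B) = card A + card B" using B finA finB by (subst card_Un_disjoint) auto
        show ?thesis using c1 c2 c3 eqNA by linarith
      qed
      have pb1: "\<And>u. u \<in> P - A \<Longrightarrow> finite (N2 u)" using less.prems(2) by (auto simp: N2_def)
      obtain h2 where h2: "inj_on h2 (P - A)" "\<forall>u\<in>P - A. h2 u \<in> N2 u"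
        using less.hyps[OF cPA finPA pb1 hall2] by blast
      define h where "h u = (if u \<in> A then h1 u else h2 u)" for u
      have "inj_on h P"
      proof (rule inj_onI)
        fix x y assume xy: "x \<in> P" "y \<in> P" "h x = h y"
        show "x = y"
        proof (cases "x \<in> A"; cases "y \<in> A")
          assume "x \<in> A" "y \<in> A" then show ?thesis using xy h1(1) by (auto simp: h_def inj_on_def)
        next
          assume "x \<notin> A" "y \<notin> A" then show ?thesis using xy h2(1) by (auto simp: h_def inj_on_def)
        next
          assume a: "x \<in> A" "y \<notin> A"
          then have "h x \<in> ?NA" using h1(2) by (auto simp: h_def)
          moreover have "h y \<notin> ?NA" using a xy(2) h2(2) by (auto simp: h_def N2_def)
          ultimately show ?thesis using xy by simp
        next
          assume a: "x \<notin> A" "y \<in> A"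
          then have "h y \<in> ?NA" using h1(2) by (auto simp: h_def)
          moreover have "h x \<notin> ?NA" using a xy(1) h2(2) by (auto simp: h_def N2_def)
          ultimately show ?thesis using xy by simp
        qed
      qed
      moreover have "\<forall>u\<in>P. h u \<in> N u" using h1(2) h2(2) by (auto simp: h_def N2_def)
      ultimately show ?thesis by blast
    next
      case False
      note noncrit = False
      obtain u0 where u0: "u0 \<in> P" using \<open>P \<noteq> {}\<close> by blast
      have "card {u0} \<le> card (N u0)" using less.prems(3)[of "{u0}"] u0 by simp
      hence "N u0 \<noteq> {}" by auto
      then obtain y where y: "y \<in> N u0" by blast
      define N2 where "N2 u = N u - {y}" for u
      have cP: "card (P - {u0}) < card P" by (simp only: card_Diff1_less_iff less.prems(1) u0 simp_thms)
      have finP: "finite (P - {u0})" using less.prems(1) by simp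
      have hall2: "card B \<le> card (\<Union>(N2 ` B))" if B: "B \<subseteq> P - {u0}" for B
      proof (cases "B = {}")
        case True then show ?thesis by simp
      next
        case False
        have "B \<subseteq> P" "B \<noteq> P" using B u0 by auto
        then have lt: "card B < card (\<Union>(N ` B))"
        proof (rule_tac ccontr)
          assume "B \<subseteq> P" "B \<noteq> P" "\<not> card B < card (\<Union>(N ` B))"
          then have "B \<subseteq> P \<and> B \<noteq> {} \<and> B \<noteq> P \<and> card (\<Union>(N ` B)) \<le> card B" using False by simp
          then show False using noncrit by blast
        qed
        have "\<Union>(N2 ` B) = \<Union>(N ` B) - {y}" by (auto simp: N2_def)
        then have "card (\<Union>(N2 ` B)) \<ge> card (\<Union>(N ` B)) - 1"
          by (simp add: card_Diff_singleton_if)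
        then show ?thesis using lt by linarith
      qed
      have pb1: "\<And>u. u \<in> P - {u0} \<Longrightarrow> finite (N2 u)" using less.prems(2) by (auto simp: N2_def)
      obtain h2 where h2: "inj_on h2 (P - {u0})" "\<forall>u\<in>P - {u0}. h2 u \<in> N2 u"
        using less.hyps[OF cP finP pb1 hall2] by blast
      define h where "h u = (if u = u0 then y else h2 u)" for u
      have "inj_on h P"
      proof (rule inj_onI)
        fix a b assume ab: "a \<in> P" "b \<in> P" "h a = h b"
        show "a = b"
        proof (cases "a = u0"; cases "b = u0")
          assume "a \<noteq> u0" "b \<noteq> u0" then show ?thesis using ab h2(1) by (auto simp: h_def inj_on_def)
        next
          assume c: "a = u0" "b \<noteq> u0"
          then have "h b \<noteq> y" using h2(2) ab(2) by (auto simp: h_def N2_def)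
          then show ?thesis using c ab(3) by (simp add: h_def)
        next
          assume c: "a \<noteq> u0" "b = u0"
          then have "h a \<noteq> y" using h2(2) ab(1) by (auto simp: h_def N2_def)
          then show ?thesis using c ab(3) by (simp add: h_def)
        qed simp
      qed
      moreover have "\<forall>u\<in>P. h u \<in> N u" using h2(2) y by (auto simp: h_def N2_def)
      ultimately show ?thesis by blast
    qed
  qed
qed

lemma card_preimage_sum:
  assumes "finite X" "finite A" "\<And>u. u \<in> A \<Longrightarrow> card {x\<in>X. s x = u} = d"
  shows "card {x\<in>X. s x \<in> A} = d * card A"
proof -
  have "{x\<in>X. s x \<in> A} = (\<Union>u\<in>A. {x\<in>X. s x = u})" by auto
  then have "card {x\<in>X. s x \<in> A} = (\<Sum>u\<in>A. card {x\<in>X. s x = u})"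
    using assms(1,2) by (simp, subst card_UN_disjoint) auto
  also have "\<dots> = (\<Sum>u\<in>A. d)" using assms(3) by simp
  finally show ?thesis by simp
qed

lemma koenig:
  fixes s :: "'x \<Rightarrow> 'u" and t :: "'x \<Rightarrow> 'v"
  assumes "finite X" "finite P" "finite Q" "s ` X \<subseteq> P" "t ` X \<subseteq> Q"
    "\<And>u. u \<in> P \<Longrightarrow> card {x\<in>X. s x = u} = d"
    "\<And>v. v \<in> Q \<Longrightarrow> card {x\<in>X. t x = v} = d"
  shows "\<exists>col. (\<forall>x\<in>X. col x < d) \<and> (\<forall>x\<in>X. \<forall>y\<in>X. s x = s y \<longrightarrow> col x = col y \<longrightarrow> x = y)
            \<and> (\<forall>x\<in>X. \<forall>y\<in>X. t x = t y \<longrightarrow> col x = col y \<longrightarrow> x = y)"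
  using assms
proof (induction d arbitrary: X)
  case 0
  have "X = {}"
  proof (rule ccontr)
    assume "X \<noteq> {}"
    then obtain x where x: "x \<in> X" by blast
    then have "s x \<in> P" using "0.prems"(4) by auto
    then have "card {y\<in>X. s y = s x} = 0" using "0.prems"(6) by blast
    moreover have "finite {y\<in>X. s y = s x}" using "0.prems"(1) by simp
    moreover have "x \<in> {y\<in>X. s y = s x}" using x by simp
    ultimately show False by auto
  qed
  then show ?case by simp
next
  case (Suc d)
  have cardS: "card {x\<in>X. s x \<in> A} = Suc d * card A" if "A \<subseteq> P" for A
    using card_preimage_sum[of X A s "Suc d"] Suc.prems(1,2,6) that finite_subset by blast
  have cardT: "card {x\<in>X. t x \<in> B} = Suc d * card B" if "B \<subseteq> Q" for B
    using card_preimage_sum[of X B t "Suc d"] Suc.prems(1,3,7) that finite_subset by blast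
  define N where "N u = t ` {x\<in>X. s x = u}" for u
  have NQ: "N u \<subseteq> Q" for u using Suc.prems(5) by (auto simp: N_def)
  have hallc: "card A \<le> card (\<Union>(N ` A))" if A: "A \<subseteq> P" for A
  proof -
    have sub: "\<Union>(N ` A) \<subseteq> Q" using NQ by auto
    have "{x\<in>X. s x \<in> A} \<subseteq> {x\<in>X. t x \<in> \<Union>(N ` A)}" by (auto simp: N_def)
    hence "card {x\<in>X. s x \<in> A} \<le> card {x\<in>X. t x \<in> \<Union>(N ` A)}"
      using Suc.prems(1) by (simp add: card_mono)
    hence "Suc d * card A \<le> Suc d * card (\<Union>(N ` A))" using cardS[OF A] cardT[OF sub] by simp
    thus ?thesis using Suc_mult_le_cancel1 by blast
  qed
  have finN: "finite (N u)" for u using Suc.prems(1) by (simp add: N_def)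
  obtain h where h: "inj_on h P" "\<forall>u\<in>P. h u \<in> N u"
    using hall[OF Suc.prems(2) finN hallc] by blast
  have "{x\<in>X. s x \<in> P} = X" "{x\<in>X. t x \<in> Q} = X" using Suc.prems(4,5) by auto
  then have "card X = Suc d * card P" "card X = Suc d * card Q" using cardS[of P] cardT[of Q] by auto
  then have "Suc d * card P = Suc d * card Q" by simp
  then have cPQ: "card P = card Q" using Suc_mult_cancel1 by blast
  have hPQ: "h ` P = Q"
  proof (rule card_subset_eq[OF Suc.prems(3)])
    show "h ` P \<subseteq> Q" using h(2) NQ by blast
    show "card (h ` P) = card Q" using card_image[OF h(1)] cPQ by simp
  qed
  define e where "e u = (SOME x. x \<in> X \<and> s x = u \<and> t x = h u)" for u
  have e: "e u \<in> X \<and> s (e u) = u \<and> t (e u) = h u" if "u \<in> P" for u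
  proof -
    have "h u \<in> t ` {x\<in>X. s x = u}" using h(2) that by (auto simp: N_def)
    then have "\<exists>x. x \<in> X \<and> s x = u \<and> t x = h u" by force
    then show ?thesis unfolding e_def by (rule someI_ex)
  qed
  define M where "M = e ` P"
  define X' where "X' = X - M"
  have fibS: "{x\<in>X'. s x = u} = {x\<in>X. s x = u} - {e u}" if u: "u \<in> P" for u
  proof
    show "{x\<in>X'. s x = u} \<subseteq> {x\<in>X. s x = u} - {e u}" using u by (auto simp: X'_def M_def)
    show "{x\<in>X. s x = u} - {e u} \<subseteq> {x\<in>X'. s x = u}"
    proof
      fix x assume x: "x \<in> {x\<in>X. s x = u} - {e u}"
      have "x \<notin> M"
      proof
        assume "x \<in> M"
        then obtain u' where u': "u' \<in> P" "x = e u'" by (auto simp: M_def)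
        then have "u' = u" using e[OF u'(1)] x by simp
        then show False using x u' by simp
      qed
      then show "x \<in> {x\<in>X'. s x = u}" using x by (simp add: X'_def)
    qed
  qed
  have fibT: "{x\<in>X'. t x = h u} = {x\<in>X. t x = h u} - {e u}" if u: "u \<in> P" for u
  proof
    show "{x\<in>X'. t x = h u} \<subseteq> {x\<in>X. t x = h u} - {e u}" using u by (auto simp: X'_def M_def)
    show "{x\<in>X. t x = h u} - {e u} \<subseteq> {x\<in>X'. t x = h u}"
    proof
      fix x assume x: "x \<in> {x\<in>X. t x = h u} - {e u}"
      have "x \<notin> M"
      proof
        assume "x \<in> M"
        then obtain u' where u': "u' \<in> P" "x = e u'" by (auto simp: M_def)
        then have "h u' = h u" using e[OF u'(1)] x by simp
        then have "u' = u" using h(1) u u'(1) by (simp add: inj_on_def)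
        then show False using x u' by simp
      qed
      then show "x \<in> {x\<in>X'. t x = h u}" using x by (simp add: X'_def)
    qed
  qed
  have p1: "finite X'" using Suc.prems(1) by (simp add: X'_def)
  have p4: "s ` X' \<subseteq> P" "t ` X' \<subseteq> Q" using Suc.prems(4,5) by (auto simp: X'_def)
  have p6: "card {x\<in>X'. s x = u} = d" if u: "u \<in> P" for u
    using fibS[OF u] Suc.prems(6)[OF u] e[OF u] by (simp add: card_Diff_singleton)
  have p7: "card {x\<in>X'. t x = v} = d" if v: "v \<in> Q" for v
  proof -
    obtain u where u: "u \<in> P" "v = h u" using v hPQ by blast
    show ?thesis using fibT[OF u(1)] Suc.prems(7)[OF v] e[OF u(1)] u(2) by (simp add: card_Diff_singleton)
  qed
  obtain col' where col': "\<forall>x\<in>X'. col' x < d"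
    "\<forall>x\<in>X'. \<forall>y\<in>X'. s x = s y \<longrightarrow> col' x = col' y \<longrightarrow> x = y"
    "\<forall>x\<in>X'. \<forall>y\<in>X'. t x = t y \<longrightarrow> col' x = col' y \<longrightarrow> x = y"
    using Suc.IH[OF p1 Suc.prems(2,3) p4 p6 p7] by blast
  define col where "col x = (if x \<in> M then d else col' x)" for x
  have c1: "\<forall>x\<in>X. col x < Suc d" using col'(1) by (fastforce simp: col_def X'_def less_Suc_eq)
  have bothM: "x \<in> M \<longleftrightarrow> y \<in> M" if "x \<in> X" "y \<in> X" "col x = col y" for x y
    using that col'(1) by (auto simp: col_def X'_def split: if_splits)
  have c2: "\<forall>x\<in>X. \<forall>y\<in>X. s x = s y \<longrightarrow> col x = col y \<longrightarrow> x = y"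
  proof (intro ballI impI)
    fix x y assume xy: "x \<in> X" "y \<in> X" "s x = s y" "col x = col y"
    show "x = y"
    proof (cases "x \<in> M")
      case True
      then have "y \<in> M" using bothM xy by blast
      then obtain u u' where "u \<in> P" "u' \<in> P" "x = e u" "y = e u'" using True by (auto simp: M_def)
      then show ?thesis using e xy(3) by metis
    next
      case False
      then have "y \<notin> M" using bothM xy by blast
      then show ?thesis using False xy col'(2) by (auto simp: col_def X'_def)
    qed
  qed
  have c3: "\<forall>x\<in>X. \<forall>y\<in>X. t x = t y \<longrightarrow> col x = col y \<longrightarrow> x = y"
  proof (intro ballI impI)
    fix x y assume xy: "x \<in> X" "y \<in> X" "t x = t y" "col x = col y"
    show "x = y"
    proof (cases "x \<in> M")
      case True
      then have "y \<in> M" using bothM xy by blast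
      then obtain u u' where uu: "u \<in> P" "u' \<in> P" "x = e u" "y = e u'" using True by (auto simp: M_def)
      then have "h u = h u'" using e xy(3) by metis
      then have "u = u'" using h(1) uu(1,2) by (simp add: inj_on_def)
      then show ?thesis using uu by simp
    next
      case False
      then have "y \<notin> M" using bothM xy by blast
      then show ?thesis using False xy col'(3) by (auto simp: col_def X'_def)
    qed
  qed
  show ?case using c1 c2 c3 by blast
qed

lemma clos:
  fixes \<sigma> :: "'c \<Rightarrow> 'c" and f :: "'c \<Rightarrow> 'f" and e :: "'c \<Rightarrow> nat" and mk :: "'f \<Rightarrow> nat \<Rightarrow> 'c"
    and g :: "'c \<Rightarrow> 'g"
  assumes fin: "finite C" and perm: "\<sigma> permutes C"
    and mk: "\<And>c n. c \<in> C \<Longrightarrow> n < d \<Longrightarrow> mk (f c) n \<in> C \<and> f (mk (f c) n) = f c \<and> e (mk (f c) n) = n"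
    and cov: "\<And>c. c \<in> C \<Longrightarrow> e c < d \<and> mk (f c) (e c) = c"
    and gc: "\<And>c n. c \<in> C \<Longrightarrow> n < d \<Longrightarrow> g (mk (f c) n) = g (mk (f (\<sigma> c)) n)"
  shows "\<exists>\<alpha> \<beta> \<gamma>. \<alpha> permutes C \<and> \<beta> permutes C \<and> \<gamma> permutes C \<and> (\<forall>c\<in>C. f (\<alpha> c) = f c)
     \<and> (\<forall>c\<in>C. g (\<beta> c) = g c) \<and> (\<forall>c\<in>C. f (\<gamma> c) = f c) \<and> \<sigma> = \<alpha> \<circ> \<beta> \<circ> \<gamma>"
proof -
  have sC: "\<sigma> c \<in> C \<longleftrightarrow> c \<in> C" for c using perm by (simp add: permutes_in_image)
  have fibS: "card {x\<in>C. f x = u} = d" if u: "u \<in> f ` C" for u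
  proof -
    obtain c0 where c0: "c0 \<in> C" "u = f c0" using u by blast
    have "{x\<in>C. f x = u} = (\<lambda>n. mk (f c0) n) ` {..<d}"
    proof
      show "{x\<in>C. f x = u} \<subseteq> (\<lambda>n. mk (f c0) n) ` {..<d}"
      proof
        fix x assume x: "x \<in> {x\<in>C. f x = u}"
        then have "x = mk (f c0) (e x)" "e x < d" using cov[of x] c0 by auto
        then show "x \<in> (\<lambda>n. mk (f c0) n) ` {..<d}" by blast
      qed
      show "(\<lambda>n. mk (f c0) n) ` {..<d} \<subseteq> {x\<in>C. f x = u}" using mk c0 by auto
    qed
    moreover have "inj_on (\<lambda>n. mk (f c0) n) {..<d}"
      by (rule inj_onI) (metis mk c0(1) lessThan_iff)
    ultimately show ?thesis by (simp add: card_image)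
  qed
  have fibT: "card {x\<in>C. f (\<sigma> x) = u} = d" if u: "u \<in> f ` C" for u
  proof -
    have "\<sigma> ` {x\<in>C. f (\<sigma> x) = u} = {x\<in>C. f x = u}"
    proof
      show "\<sigma> ` {x\<in>C. f (\<sigma> x) = u} \<subseteq> {x\<in>C. f x = u}" using sC by auto
      show "{x\<in>C. f x = u} \<subseteq> \<sigma> ` {x\<in>C. f (\<sigma> x) = u}"
      proof
        fix y assume y: "y \<in> {x\<in>C. f x = u}"
        have yy: "\<sigma> (inv \<sigma> y) = y" by (rule permutes_inverses(1)[OF perm])
        have iC: "inv \<sigma> y \<in> C" using y sC[of "inv \<sigma> y"] yy by simp
        have "inv \<sigma> y \<in> {x\<in>C. f (\<sigma> x) = u}" using iC yy y by simp
        then show "y \<in> \<sigma> ` {x\<in>C. f (\<sigma> x) = u}" using yy by (metis image_eqI)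
      qed
    qed
    moreover have "inj_on \<sigma> {x\<in>C. f (\<sigma> x) = u}" using permutes_inj[OF perm] by (simp add: inj_on_def)
    ultimately show ?thesis using fibS[OF u] card_image by metis
  qed
  have img: "(\<lambda>x. f (\<sigma> x)) ` C \<subseteq> f ` C" using sC by auto
  obtain \<kappa> where \<kappa>: "\<forall>x\<in>C. \<kappa> x < d" "\<forall>x\<in>C. \<forall>y\<in>C. f x = f y \<longrightarrow> \<kappa> x = \<kappa> y \<longrightarrow> x = y"
    "\<forall>x\<in>C. \<forall>y\<in>C. f (\<sigma> x) = f (\<sigma> y) \<longrightarrow> \<kappa> x = \<kappa> y \<longrightarrow> x = y"
    using koenig[of C "f ` C" "f ` C" f "\<lambda>x. f (\<sigma> x)" d] fin img fibS fibT by auto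
  define \<gamma> where "\<gamma> c = (if c \<in> C then mk (f c) (\<kappa> c) else c)" for c
  define \<zeta> where "\<zeta> c = (if c \<in> C then mk (f (\<sigma> c)) (\<kappa> c) else c)" for c
  have \<gamma>p: "\<gamma> c \<in> C \<and> f (\<gamma> c) = f c \<and> e (\<gamma> c) = \<kappa> c" if "c \<in> C" for c
    using mk[of c "\<kappa> c"] \<kappa>(1) that by (simp add: \<gamma>_def)
  have \<zeta>p: "\<zeta> c \<in> C \<and> f (\<zeta> c) = f (\<sigma> c) \<and> e (\<zeta> c) = \<kappa> c" if "c \<in> C" for c
    using mk[of "\<sigma> c" "\<kappa> c"] \<kappa>(1) that sC by (simp add: \<zeta>_def)
  have \<gamma>perm: "\<gamma> permutes C"
  proof (rule perm_of_inj[OF fin])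
    show "\<gamma> ` C \<subseteq> C" using \<gamma>p by auto
    show "inj_on \<gamma> C" by (rule inj_onI) (metis \<gamma>p \<kappa>(2))
    show "\<And>x. x \<notin> C \<Longrightarrow> \<gamma> x = x" by (simp add: \<gamma>_def)
  qed
  have \<zeta>perm: "\<zeta> permutes C"
  proof (rule perm_of_inj[OF fin])
    show "\<zeta> ` C \<subseteq> C" using \<zeta>p by auto
    show "inj_on \<zeta> C" by (rule inj_onI) (metis \<zeta>p \<kappa>(3))
    show "\<And>x. x \<notin> C \<Longrightarrow> \<zeta> x = x" by (simp add: \<zeta>_def)
  qed
  define \<alpha> where "\<alpha> = \<sigma> \<circ> inv \<zeta>"
  define \<beta> where "\<beta> = \<zeta> \<circ> inv \<gamma>"
  have ap: "\<alpha> permutes C" unfolding \<alpha>_def by (intro permutes_compose permutes_inv perm \<zeta>perm)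
  have bp: "\<beta> permutes C" unfolding \<beta>_def by (intro permutes_compose permutes_inv \<gamma>perm \<zeta>perm)
  have eq: "\<sigma> = \<alpha> \<circ> \<beta> \<circ> \<gamma>"
    unfolding \<alpha>_def \<beta>_def using permutes_inv_o(2)[OF \<zeta>perm] permutes_inv_o(2)[OF \<gamma>perm]
    by (simp add: comp_assoc)
  have fa: "f (\<alpha> z) = f z" if z: "z \<in> C" for z
  proof -
    have c: "inv \<zeta> z \<in> C" using z permutes_in_image[OF permutes_inv[OF \<zeta>perm]] by simp
    have "\<zeta> (inv \<zeta> z) = z" by (rule permutes_inverses(1)[OF \<zeta>perm])
    then show ?thesis using \<zeta>p[OF c] by (simp add: \<alpha>_def)
  qed
  have gb: "g (\<beta> y) = g y" if y: "y \<in> C" for y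
  proof -
    have c: "inv \<gamma> y \<in> C" using y permutes_in_image[OF permutes_inv[OF \<gamma>perm]] by simp
    have yy: "\<gamma> (inv \<gamma> y) = y" by (rule permutes_inverses(1)[OF \<gamma>perm])
    have "\<beta> y = mk (f (\<sigma> (inv \<gamma> y))) (\<kappa> (inv \<gamma> y))" using c by (simp add: \<beta>_def \<zeta>_def)
    moreover have "y = mk (f (inv \<gamma> y)) (\<kappa> (inv \<gamma> y))" using c yy by (simp add: \<gamma>_def)
    ultimately show ?thesis using gc[OF c, of "\<kappa> (inv \<gamma> y)"] \<kappa>(1) c by metis
  qed
  show ?thesis using ap bp \<gamma>perm fa gb \<gamma>p eq by blast
qed

lemma round_decomp:
  assumes "finite C" "\<pi> permutes C" "\<And>c. c \<in> C \<Longrightarrow> key (\<pi> c) = key c"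
    "\<And>c. c \<in> C \<Longrightarrow> key c \<in> set ks"
  shows "\<exists>ps. length ps = length ks \<and> (\<forall>p\<in>set ps. \<exists>\<kappa>\<in>set ks. p permutes {c\<in>C. key c = \<kappa>})
             \<and> \<pi> = foldr (\<circ>) ps id"
  using assms
proof (induction ks arbitrary: C \<pi>)
  case Nil
  then have "C = {}" by auto
  then have "\<pi> = id" using Nil.prems(2) by simp
  then show ?case by simp
next
  case (Cons \<kappa> ks)
  define T where "T = {c\<in>C. key c = \<kappa>}"
  define C' where "C' = {c\<in>C. key c \<noteq> \<kappa>}"
  define r where "r x = (if x \<in> T then \<pi> x else x)" for x
  define \<pi>2 where "\<pi>2 x = (if x \<in> T then x else \<pi> x)" for x
  have sC: "\<pi> c \<in> C \<longleftrightarrow> c \<in> C" for c using Cons.prems(2) by (simp add: permutes_in_image)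
  have injp: "inj \<pi>" using permutes_inj[OF Cons.prems(2)] .
  have rp: "r permutes T"
  proof (rule perm_of_inj)
    show "finite T" using Cons.prems(1) by (simp add: T_def)
    show "r ` T \<subseteq> T" using sC Cons.prems(3) by (auto simp: r_def T_def)
    show "inj_on r T" using injp by (auto simp: r_def inj_on_def)
    show "\<And>x. x \<notin> T \<Longrightarrow> r x = x" by (simp add: r_def)
  qed
  have p2: "\<pi>2 permutes C'"
  proof (rule perm_of_inj)
    show "finite C'" using Cons.prems(1) by (simp add: C'_def)
    show "\<pi>2 ` C' \<subseteq> C'" using sC Cons.prems(3) by (auto simp: \<pi>2_def T_def C'_def)
    show "inj_on \<pi>2 C'" using injp by (auto simp: \<pi>2_def inj_on_def T_def C'_def)
    show "\<And>x. x \<notin> C' \<Longrightarrow> \<pi>2 x = x" using Cons.prems(2) by (auto simp: \<pi>2_def T_def C'_def permutes_not_in)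
  qed
  have k2: "key (\<pi>2 c) = key c" if "c \<in> C'" for c using Cons.prems(3) that by (auto simp: \<pi>2_def C'_def)
  have k3: "key c \<in> set ks" if "c \<in> C'" for c using Cons.prems(4) that by (auto simp: C'_def)
  have finC': "finite C'" using Cons.prems(1) by (simp add: C'_def)
  have "\<exists>ps. length ps = length ks \<and> (\<forall>p\<in>set ps. \<exists>\<kappa>\<in>set ks. p permutes {c\<in>C'. key c = \<kappa>})
    \<and> \<pi>2 = foldr (\<circ>) ps id"
    by (rule Cons.IH[OF finC' p2 k2 k3])
  then obtain ps where ps: "length ps = length ks" "\<forall>p\<in>set ps. \<exists>\<kappa>\<in>set ks. p permutes {c\<in>C'. key c = \<kappa>}"
    "\<pi>2 = foldr (\<circ>) ps id" by blast
  have dec: "\<pi> = r \<circ> \<pi>2"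
  proof
    fix x show "\<pi> x = (r \<circ> \<pi>2) x"
    proof (cases "x \<in> T")
      case True then show ?thesis by (simp add: r_def \<pi>2_def)
    next
      case False
      show ?thesis
      proof (cases "x \<in> C")
        case True
        then have "\<pi> x \<notin> T" using False Cons.prems(3) by (auto simp: T_def)
        then show ?thesis using False by (simp add: r_def \<pi>2_def)
      next
        case xC: False
        then have "\<pi> x = x" using Cons.prems(2) by (simp add: permutes_not_in)
        then show ?thesis using False by (simp add: r_def \<pi>2_def)
      qed
    qed
  qed
  have pall: "\<forall>p\<in>set (r # ps). \<exists>\<kappa>'\<in>set (\<kappa> # ks). p permutes {c\<in>C. key c = \<kappa>'}"
  proof
    fix p assume "p \<in> set (r # ps)"
    then consider "p = r" | "p \<in> set ps" by auto
    then show "\<exists>\<kappa>'\<in>set (\<kappa> # ks). p permutes {c\<in>C. key c = \<kappa>'}"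
    proof cases
      case 1 then show ?thesis using rp by (auto simp: T_def)
    next
      case 2
      then obtain \<kappa>' where k: "\<kappa>' \<in> set ks" "p permutes {c\<in>C'. key c = \<kappa>'}" using ps(2) by blast
      have "{c\<in>C'. key c = \<kappa>'} \<subseteq> {c\<in>C. key c = \<kappa>'}" by (auto simp: C'_def)
      then show ?thesis using k permutes_subset by fastforce
    qed
  qed
  have l: "length (r # ps) = length (\<kappa> # ks)" using ps(1) by simp
  have fe: "\<pi> = foldr (\<circ>) (r # ps) id" using dec ps(3) by simp
  have all3: "length (r # ps) = length (\<kappa> # ks) \<and> (\<forall>p\<in>set (r # ps). \<exists>\<kappa>'\<in>set (\<kappa> # ks). p permutes {c\<in>C. key c = \<kappa>'}) \<and> \<pi> = foldr (\<circ>) (r # ps) id"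
    using l pall fe by (simp only: simp_thms)
  show ?case using all3 by (rule exI)
qed

lemma foldr_comp: "foldr (\<circ>) xs g = foldr (\<circ>) xs id \<circ> g"
  by (induction xs) (auto simp: comp_assoc)

lemma apply_shuffles_foldr: "apply_shuffles S ps = S \<circ> foldr (\<circ>) ps id"
  unfolding apply_shuffles_def
  by (induction ps arbitrary: S) (simp_all add: comp_assoc)

lemma memC: "(i, j, k) \<in> cells m1 m2 m3 \<longleftrightarrow> i < m1 \<and> j < m2 \<and> k < m3"
  by (simp add: cells_def)

lemma finite_cells: "finite (cells m1 m2 m3)"
proof -
  have "cells m1 m2 m3 \<subseteq> {..<m1} \<times> {..<m2} \<times> {..<m3}" by (auto simp: cells_def)
  then show ?thesis by (rule finite_subset) simp
qed

lemma line3: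
  assumes "\<kappa> \<in> set (List.product [0..<m1] [0..<m2])"
  shows "{c \<in> cells m1 m2 m3. (fst c, fst (snd c)) = \<kappa>} \<in> table_lines m1 m2 m3"
proof -
  obtain i j where ij: "\<kappa> = (i, j)" "i < m1" "j < m2" using assms by auto
  have "{c \<in> cells m1 m2 m3. (fst c, fst (snd c)) = \<kappa>} = {(i, j, k) | k. k < m3}"
    using ij by (auto simp: cells_def)
  then show ?thesis using ij unfolding table_lines_def by blast
qed

lemma line1:
  assumes "\<kappa> \<in> set (List.product [0..<m2] [0..<m3])"
  shows "{c \<in> cells m1 m2 m3. (fst (snd c), snd (snd c)) = \<kappa>} \<in> table_lines m1 m2 m3"
proof -
  obtain j k where jk: "\<kappa> = (j, k)" "j < m2" "k < m3" using assms by auto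
  have "{c \<in> cells m1 m2 m3. (fst (snd c), snd (snd c)) = \<kappa>} = {(i, j, k) | i. i < m1}"
    using jk by (auto simp: cells_def)
  then show ?thesis using jk unfolding table_lines_def by blast
qed

lemma line2:
  assumes "\<kappa> \<in> set (List.product [0..<m1] [0..<m3])"
  shows "{c \<in> cells m1 m2 m3. (fst c, snd (snd c)) = \<kappa>} \<in> table_lines m1 m2 m3"
proof -
  obtain i k where ik: "\<kappa> = (i, k)" "i < m1" "k < m3" using assms by auto
  have "{c \<in> cells m1 m2 m3. (fst c, snd (snd c)) = \<kappa>} = {(i, j, k) | j. j < m2}"
    using ik by (auto simp: cells_def)
  then show ?thesis using ik unfolding table_lines_def by blast
qed

lemma round_shuffles:
  assumes "\<pi> permutes cells m1 m2 m3" "\<And>c. c \<in> cells m1 m2 m3 \<Longrightarrow> key (\<pi> c) = key c"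
    "\<And>c. c \<in> cells m1 m2 m3 \<Longrightarrow> key c \<in> set ks"
    "\<And>\<kappa>. \<kappa> \<in> set ks \<Longrightarrow> {c \<in> cells m1 m2 m3. key c = \<kappa>} \<in> table_lines m1 m2 m3"
  shows "\<exists>ps. length ps = length ks \<and> (\<forall>p\<in>set ps. is_shuffle m1 m2 m3 p) \<and> \<pi> = foldr (\<circ>) ps id"
proof -
  obtain ps where ps: "length ps = length ks" "\<forall>p\<in>set ps. \<exists>\<kappa>\<in>set ks. p permutes {c\<in>cells m1 m2 m3. key c = \<kappa>}"
     "\<pi> = foldr (\<circ>) ps id"
    using round_decomp[of "cells m1 m2 m3" \<pi> key ks, OF finite_cells assms(1-3)] by blast
  have "\<forall>p\<in>set ps. is_shuffle m1 m2 m3 p"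
    using ps(2) assms(4) unfolding is_shuffle_def by blast
  then show ?thesis using ps(1,3) by blast
qed

lemma foldr_append_id: "foldr (\<circ>) (xs @ ys) id = foldr (\<circ>) xs id \<circ> foldr (\<circ>) ys id"
  by (simp only: foldr_append foldr_comp[of xs "foldr (\<circ>) ys id"])

theorem mainTheorem10:
  fixes m1 m2 m3 :: nat and Items :: "'b set"
    and S G :: "nat \<times> nat \<times> nat \<Rightarrow> 'b"
  assumes "m1 \<ge> m2" and "m2 \<ge> m3"
    and "bij_betw S (cells m1 m2 m3) Items"
    and "bij_betw G (cells m1 m2 m3) Items"
  shows "\<exists>ps. length ps \<le> m1 * m2 + m3 * (2 * m2 + m1) + m1 * m2
           \<and> (\<forall>p \<in> set ps. is_shuffle m1 m2 m3 p)
           \<and> (\<forall>c \<in> cells m1 m2 m3. apply_shuffles S ps c = G c)"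
proof -
  define C where "C = cells m1 m2 m3"
  have finC: "finite C" by (simp add: C_def finite_cells)
  have bS: "bij_betw S C Items" and bG: "bij_betw G C Items" using assms(3,4) by (simp_all add: C_def)
  define \<sigma>0 where "\<sigma>0 c = (if c \<in> C then inv_into C S (G c) else c)" for c
  have GI: "G c \<in> S ` C" if "c \<in> C" for c using bS bG that by (auto simp: bij_betw_def)
  have \<sigma>0perm: "\<sigma>0 permutes C"
  proof (rule perm_of_inj[OF finC])
    show "\<sigma>0 ` C \<subseteq> C" using GI by (auto simp: \<sigma>0_def inv_into_into)
    show "inj_on \<sigma>0 C"
    proof (rule inj_onI)
      fix x y assume xy: "x \<in> C" "y \<in> C" "\<sigma>0 x = \<sigma>0 y"
      then have "S (inv_into C S (G x)) = S (inv_into C S (G y))" by (simp add: \<sigma>0_def)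
      then have "G x = G y" using GI xy(1,2) by (simp add: f_inv_into_f)
      then show "x = y" using bG xy(1,2) by (auto simp: bij_betw_def inj_on_def)
    qed
    show "\<And>x. x \<notin> C \<Longrightarrow> \<sigma>0 x = x" by (simp add: \<sigma>0_def)
  qed
  have \<sigma>0S: "S (\<sigma>0 c) = G c" if "c \<in> C" for c using GI[OF that] that by (simp add: \<sigma>0_def f_inv_into_f)
  obtain \<alpha> \<beta> \<gamma> where abg: "\<alpha> permutes C" "\<beta> permutes C" "\<gamma> permutes C"
    "\<forall>c\<in>C. (fst (\<alpha> c), fst (snd (\<alpha> c))) = (fst c, fst (snd c))"
    "\<forall>c\<in>C. snd (snd (\<beta> c)) = snd (snd c)"
    "\<forall>c\<in>C. (fst (\<gamma> c), fst (snd (\<gamma> c))) = (fst c, fst (snd c))"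
    "\<sigma>0 = \<alpha> \<circ> \<beta> \<circ> \<gamma>"
  proof -
    have "\<exists>\<alpha> \<beta> \<gamma>. \<alpha> permutes C \<and> \<beta> permutes C \<and> \<gamma> permutes C
      \<and> (\<forall>c\<in>C. (\<lambda>c. (fst c, fst (snd c))) (\<alpha> c) = (\<lambda>c. (fst c, fst (snd c))) c)
      \<and> (\<forall>c\<in>C. (\<lambda>c. snd (snd c)) (\<beta> c) = (\<lambda>c. snd (snd c)) c)
      \<and> (\<forall>c\<in>C. (\<lambda>c. (fst c, fst (snd c))) (\<gamma> c) = (\<lambda>c. (fst c, fst (snd c))) c) \<and> \<sigma>0 = \<alpha> \<circ> \<beta> \<circ> \<gamma>"
    proof (rule clos[OF finC \<sigma>0perm, where d = m3 and e = "\<lambda>c. snd (snd c)"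
          and mk = "\<lambda>a n. (fst a, snd a, n)"])
      show "\<And>c n. c \<in> C \<Longrightarrow> n < m3 \<Longrightarrow> (fst ((fst c, fst (snd c))), snd ((fst c, fst (snd c))), n) \<in> C \<and>
           (fst (fst ((fst c, fst (snd c))), snd ((fst c, fst (snd c))), n),
            fst (snd (fst ((fst c, fst (snd c))), snd ((fst c, fst (snd c))), n))) = (fst c, fst (snd c)) \<and>
           snd (snd (fst ((fst c, fst (snd c))), snd ((fst c, fst (snd c))), n)) = n"
        by (auto simp: C_def cells_def)
      show "\<And>c. c \<in> C \<Longrightarrow> snd (snd c) < m3 \<and> (fst ((fst c, fst (snd c))), snd ((fst c, fst (snd c))), snd (snd c)) = c"
        by (auto simp: C_def cells_def)
    qed simp
    then show ?thesis using that by auto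
  qed
  obtain \<alpha>' \<beta>' \<gamma>' where abg': "\<alpha>' permutes C" "\<beta>' permutes C" "\<gamma>' permutes C"
    "\<forall>c\<in>C. (fst (snd (\<alpha>' c)), snd (snd (\<alpha>' c))) = (fst (snd c), snd (snd c))"
    "\<forall>c\<in>C. (fst (\<beta>' c), snd (snd (\<beta>' c))) = (fst c, snd (snd c))"
    "\<forall>c\<in>C. (fst (snd (\<gamma>' c)), snd (snd (\<gamma>' c))) = (fst (snd c), snd (snd c))"
    "\<beta> = \<alpha>' \<circ> \<beta>' \<circ> \<gamma>'"
  proof -
    have "\<exists>\<alpha> \<beta>' \<gamma>. \<alpha> permutes C \<and> \<beta>' permutes C \<and> \<gamma> permutes C
      \<and> (\<forall>c\<in>C. (\<lambda>c. (fst (snd c), snd (snd c))) (\<alpha> c) = (\<lambda>c. (fst (snd c), snd (snd c))) c)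
      \<and> (\<forall>c\<in>C. (\<lambda>c. (fst c, snd (snd c))) (\<beta>' c) = (\<lambda>c. (fst c, snd (snd c))) c)
      \<and> (\<forall>c\<in>C. (\<lambda>c. (fst (snd c), snd (snd c))) (\<gamma> c) = (\<lambda>c. (fst (snd c), snd (snd c))) c) \<and> \<beta> = \<alpha> \<circ> \<beta>' \<circ> \<gamma>"
    proof (rule clos[OF finC abg(2), where d = m1 and e = "\<lambda>c. fst c"
          and mk = "\<lambda>a n. (n, fst a, snd a)"])
      show "\<And>c n. c \<in> C \<Longrightarrow> n < m1 \<Longrightarrow> (n, fst ((fst (snd c), snd (snd c))), snd ((fst (snd c), snd (snd c)))) \<in> C \<and>
           (fst (snd (n, fst ((fst (snd c), snd (snd c))), snd ((fst (snd c), snd (snd c))))),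
            snd (snd (n, fst ((fst (snd c), snd (snd c))), snd ((fst (snd c), snd (snd c)))))) = (fst (snd c), snd (snd c)) \<and>
           fst (n, fst ((fst (snd c), snd (snd c))), snd ((fst (snd c), snd (snd c)))) = n"
        by (auto simp: C_def cells_def)
      show "\<And>c. c \<in> C \<Longrightarrow> fst c < m1 \<and> (fst c, fst ((fst (snd c), snd (snd c))), snd ((fst (snd c), snd (snd c)))) = c"
        by (auto simp: C_def cells_def)
      show "\<And>c n. c \<in> C \<Longrightarrow> n < m1 \<Longrightarrow>
           (fst (n, fst ((fst (snd c), snd (snd c))), snd ((fst (snd c), snd (snd c)))),
            snd (snd (n, fst ((fst (snd c), snd (snd c))), snd ((fst (snd c), snd (snd c)))))) =
           (fst (n, fst ((fst (snd (\<beta> c)), snd (snd (\<beta> c)))), snd ((fst (snd (\<beta> c)), snd (snd (\<beta> c))))),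
            snd (snd (n, fst ((fst (snd (\<beta> c)), snd (snd (\<beta> c)))), snd ((fst (snd (\<beta> c)), snd (snd (\<beta> c)))))))"
        using abg(5) by simp
    qed
    then show ?thesis using that by auto
  qed
  have k3: "(fst c, fst (snd c)) \<in> set (List.product [0..<m1] [0..<m2])" if "c \<in> C" for c
    using that by (auto simp: C_def cells_def)
  have k1: "(fst (snd c), snd (snd c)) \<in> set (List.product [0..<m2] [0..<m3])" if "c \<in> C" for c
    using that by (auto simp: C_def cells_def)
  have k2: "(fst c, snd (snd c)) \<in> set (List.product [0..<m1] [0..<m3])" if "c \<in> C" for c
    using that by (auto simp: C_def cells_def)
  obtain ps1 where ps1: "length ps1 = m1 * m2" "\<forall>p\<in>set ps1. is_shuffle m1 m2 m3 p" "\<alpha> = foldr (\<circ>) ps1 id"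
    using round_shuffles[of \<alpha> m1 m2 m3 "\<lambda>c. (fst c, fst (snd c))" "List.product [0..<m1] [0..<m2]"]
      abg(1,4) k3 line3 by (auto simp: C_def)
  obtain ps2 where ps2: "length ps2 = m2 * m3" "\<forall>p\<in>set ps2. is_shuffle m1 m2 m3 p" "\<alpha>' = foldr (\<circ>) ps2 id"
    using round_shuffles[of \<alpha>' m1 m2 m3 "\<lambda>c. (fst (snd c), snd (snd c))" "List.product [0..<m2] [0..<m3]"]
      abg'(1,4) k1 line1 by (auto simp: C_def)
  obtain ps3 where ps3: "length ps3 = m1 * m3" "\<forall>p\<in>set ps3. is_shuffle m1 m2 m3 p" "\<beta>' = foldr (\<circ>) ps3 id"
    using round_shuffles[of \<beta>' m1 m2 m3 "\<lambda>c. (fst c, snd (snd c))" "List.product [0..<m1] [0..<m3]"]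
      abg'(2,5) k2 line2 by (auto simp: C_def)
  obtain ps4 where ps4: "length ps4 = m2 * m3" "\<forall>p\<in>set ps4. is_shuffle m1 m2 m3 p" "\<gamma>' = foldr (\<circ>) ps4 id"
    using round_shuffles[of \<gamma>' m1 m2 m3 "\<lambda>c. (fst (snd c), snd (snd c))" "List.product [0..<m2] [0..<m3]"]
      abg'(3,6) k1 line1 by (auto simp: C_def)
  obtain ps5 where ps5: "length ps5 = m1 * m2" "\<forall>p\<in>set ps5. is_shuffle m1 m2 m3 p" "\<gamma> = foldr (\<circ>) ps5 id"
    using round_shuffles[of \<gamma> m1 m2 m3 "\<lambda>c. (fst c, fst (snd c))" "List.product [0..<m1] [0..<m2]"]
      abg(3,6) k3 line3 by (auto simp: C_def)
  define ps where "ps = ps1 @ ps2 @ ps3 @ ps4 @ ps5"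
  have len: "length ps \<le> m1 * m2 + m3 * (2 * m2 + m1) + m1 * m2"
    using ps1(1) ps2(1) ps3(1) ps4(1) ps5(1) by (simp add: ps_def algebra_simps)
  have sh: "\<forall>p \<in> set ps. is_shuffle m1 m2 m3 p"
    using ps1(2) ps2(2) ps3(2) ps4(2) ps5(2) by (auto simp: ps_def)
  have comp: "foldr (\<circ>) ps id = \<sigma>0"
    unfolding ps_def foldr_append_id using ps1(3) ps2(3) ps3(3) ps4(3) ps5(3) abg(7) abg'(7)
    by (simp add: comp_assoc)
  have "\<forall>c \<in> cells m1 m2 m3. apply_shuffles S ps c = G c"
    using \<sigma>0S by (simp add: apply_shuffles_foldr comp C_def)
  then show ?thesis using len sh by blast
qed

end
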